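(* The real form $$O_{(4,1)}(x,y,z,w)=x^4z^2w^2+y^4x^2w^2+z^4x^2y^2+w^4y^2z^2-4x^2y^2z^2w^2$$ is an extremal element of $\mathcal P_{4,8}$.
   Context: $\mathcal P_{n,m}$ denotes the convex cone of all positive semidefinite real forms (homogeneous polynomials nonnegative on $\mathbb R^n$) in $n$ variables of degree $m$. A form $F\in\mathcal P_{n,m}$ is extremal if $F=F_1+F_2$ with $F_1,F_2\in\mathcal P_{n,m}$ implies $F_i=\lambda_iF$ for some nonnegative reals $\lambda_i$. *)

theory Defs
  imports Main Complex_Main
begin

text \<open>Real forms in n variables of degree m, viewed as functions on points
  x :: nat \<Rightarrow> real, of which only the coordinates x 0, ..., x (n-1) are used.\<close>

definition is_form :: "nat \<Rightarrow> nat \<Rightarrow> ((nat \<Rightarrow> real) \<Rightarrow> real) \<Rightarrow> bool" where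
  "is_form n m F \<longleftrightarrow>
     (\<exists>S :: (nat \<Rightarrow> nat) set. \<exists>c :: (nat \<Rightarrow> nat) \<Rightarrow> real.
        finite S \<and>
        (\<forall>a\<in>S. (\<forall>i\<ge>n. a i = 0) \<and> (\<Sum>i<n. a i) = m) \<and>
        (\<forall>x. F x = (\<Sum>a\<in>S. c a * (\<Prod>i<n. x i ^ a i))))"

definition psd_forms :: "nat \<Rightarrow> nat \<Rightarrow> ((nat \<Rightarrow> real) \<Rightarrow> real) set" where
  "psd_forms n m = {F. is_form n m F \<and> (\<forall>x. F x \<ge> 0)}"

definition extremal :: "nat \<Rightarrow> nat \<Rightarrow> ((nat \<Rightarrow> real) \<Rightarrow> real) \<Rightarrow> bool" where
  "extremal n m F \<longleftrightarrow> F \<in> psd_forms n m \<and>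
     (\<forall>F1 F2. F1 \<in> psd_forms n m \<longrightarrow> F2 \<in> psd_forms n m \<longrightarrow>
        (\<forall>x. F x = F1 x + F2 x) \<longrightarrow>
        (\<exists>l1 l2 :: real. l1 \<ge> 0 \<and> l2 \<ge> 0 \<and>
           (\<forall>x. F1 x = l1 * F x) \<and> (\<forall>x. F2 x = l2 * F x)))"

definition O41 :: "(nat \<Rightarrow> real) \<Rightarrow> real" where
  "O41 v = (let x = v 0; y = v 1; z = v 2; w = v 3 in
     x^4*z^2*w^2 + y^4*x^2*w^2 + z^4*x^2*y^2 + w^4*y^2*z^2 - 4*x^2*y^2*z^2*w^2)"

end

theory Submission
  imports Defs
begin


definition Box :: "(nat\<times>nat\<times>nat\<times>nat) set" where
  "Box = {..8} \<times> {..8} \<times> {..8} \<times> {..8}"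

fun mm :: "nat\<times>nat\<times>nat\<times>nat \<Rightarrow> (nat\<Rightarrow>real) \<Rightarrow> real" where
  "mm (i,j,k,l) v = v 0^i * v 1^j * v 2^k * v 3^l"

fun bsum :: "nat\<times>nat\<times>nat\<times>nat \<Rightarrow> nat" where
  "bsum (i,j,k,l) = i+j+k+l"

lemma finite_Box[simp]: "finite Box" by (simp add: Box_def)

lemma rep:
  assumes "is_form 4 8 G"
  obtains C where "\<And>v. G v = (\<Sum>b\<in>Box. C b * mm b v)"
    "\<And>b. C b \<noteq> 0 \<Longrightarrow> b \<in> Box \<and> bsum b = 8"
proof -
  obtain S c where fin: "finite S" and h: "\<forall>a\<in>S. (\<forall>i\<ge>4. a i = 0) \<and> (\<Sum>i<4. a i) = 8"
    and e: "\<forall>x. G x = (\<Sum>a\<in>S. c a * (\<Prod>i<4. x i ^ a i))"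
    using assms unfolding is_form_def by blast
  define tup where "tup a = (a 0, a 1, a 2, a 3)" for a :: "nat \<Rightarrow> nat"
  define C where "C b = (\<Sum>a\<in>{a\<in>S. tup a = b}. c a)" for b
  have prod: "(\<Prod>i<4. x i ^ a i) = mm (tup a) x" for a x
    by (simp add: tup_def eval_nat_numeral mult.assoc)
  have s8: "a 0 + a 1 + a 2 + a 3 = 8" if "a \<in> S" for a
    using h that by (simp add: eval_nat_numeral)
  have img: "tup ` S \<subseteq> Box"
  proof
    fix b assume "b \<in> tup ` S"
    then obtain a where "a \<in> S" "b = tup a" by blast
    with s8[OF this(1)] show "b \<in> Box" by (auto simp: Box_def tup_def)
  qed
  have "G v = (\<Sum>b\<in>Box. C b * mm b v)" for v
  proof -
    have "G v = (\<Sum>a\<in>S. c a * mm (tup a) v)" using e prod by simp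
    also have "\<dots> = (\<Sum>b\<in>Box. \<Sum>a\<in>{a\<in>S. tup a = b}. c a * mm (tup a) v)"
      using sum.group[OF fin finite_Box img, of "\<lambda>a. c a * mm (tup a) v"] by simp
    also have "\<dots> = (\<Sum>b\<in>Box. \<Sum>a\<in>{a\<in>S. tup a = b}. c a * mm b v)"
      by (intro sum.cong refl) auto
    also have "\<dots> = (\<Sum>b\<in>Box. C b * mm b v)"
      by (simp add: C_def sum_distrib_right)
    finally show ?thesis .
  qed
  moreover have "b \<in> Box \<and> bsum b = 8" if "C b \<noteq> 0" for b
  proof -
    from that obtain a where "a \<in> S" "tup a = b" unfolding C_def
      by (metis (mono_tags, lifting) empty_iff mem_Collect_eq sum.empty subsetI sum.neutral)
    with s8[OF this(1)] img show ?thesis by (auto simp: tup_def)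
  qed
  ultimately show ?thesis using that by blast
qed



lemma pf: "(\<forall>x::real. (\<Sum>i\<le>n. c i * x^i) = 0) \<Longrightarrow> i \<le> n \<Longrightarrow> c i = 0"
  using polyfun_eq_0[where n=n and c=c] by auto

lemma box_sum: "(\<Sum>b\<in>Box. g b) = (\<Sum>i\<le>8. \<Sum>j\<le>8. \<Sum>k\<le>8. \<Sum>l\<le>8. g (i,j,k,l))"
  unfolding Box_def by (simp add: sum.cartesian_product)

lemma ind:
  assumes "\<forall>L. (\<Sum>b\<in>Box. D b * mm b L) = 0" and "b \<in> Box"
  shows "D b = 0"
proof -
  obtain i j k l where b: "b = (i,j,k,l)" by (cases b) auto
  with assms(2) have ijkl: "i \<le> 8" "j \<le> 8" "k \<le> 8" "l \<le> 8" by (auto simp: Box_def)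
  have e1: "(\<Sum>i\<le>8. (\<Sum>j\<le>8. (\<Sum>k\<le>8. (\<Sum>l\<le>8. D(i,j,k,l)*x3^l)*x2^k)*x1^j)*x0^i) = 0" for x0 x1 x2 x3
  proof -
    define L where "L = (\<lambda>n::nat. if n=0 then x0 else if n=1 then x1 else if n=2 then x2 else x3)"
    have "(\<Sum>b\<in>Box. D b * mm b L) = 0" using assms(1) by blast
    then show ?thesis unfolding box_sum
      by (simp add: L_def sum_distrib_left sum_distrib_right mult_ac)
  qed
  have e2: "(\<Sum>j\<le>8. (\<Sum>k\<le>8. (\<Sum>l\<le>8. D(i,j,k,l)*x3^l)*x2^k)*x1^j) = 0" for x1 x2 x3
    using pf[where n=8 and i=i and c="\<lambda>i. (\<Sum>j\<le>8. (\<Sum>k\<le>8. (\<Sum>l\<le>8. D(i,j,k,l)*x3^l)*x2^k)*x1^j)"] e1 ijkl by blast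
  have e3: "(\<Sum>k\<le>8. (\<Sum>l\<le>8. D(i,j,k,l)*x3^l)*x2^k) = 0" for x2 x3
    using pf[where n=8 and i=j and c="\<lambda>j. (\<Sum>k\<le>8. (\<Sum>l\<le>8. D(i,j,k,l)*x3^l)*x2^k)"] e2 ijkl by blast
  have e4: "(\<Sum>l\<le>8. D(i,j,k,l)*x3^l) = 0" for x3
    using pf[where n=8 and i=k and c="\<lambda>k. (\<Sum>l\<le>8. D(i,j,k,l)*x3^l)"] e3 ijkl by blast
  show ?thesis using pf[where n=8 and i=l and c="\<lambda>l. D(i,j,k,l)"] e4 ijkl b by blast
qed



lemma ulow_step:
  fixes d :: "nat \<Rightarrow> real"
  assumes b: "\<forall>t. 0<t \<and> t\<le>1 \<longrightarrow> \<bar>\<Sum>k\<le>N. d k * t^k\<bar> \<le> K * t^m"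
    and nm: "n < m" and nN: "n \<le> N" and z: "\<forall>k<n. d k = 0"
  shows "d n = 0"
proof (rule ccontr)
  assume dn: "d n \<noteq> 0"
  define M where "M = (\<Sum>k\<in>{..N}-{n}. \<bar>d k\<bar>)"
  have M0: "M \<ge> 0" unfolding M_def by (simp add: sum_nonneg)
  have K0: "K \<ge> 0" using b[rule_format, of 1] by (auto intro: order_trans[OF abs_ge_zero])
  have key: "\<bar>d n\<bar> \<le> (K+M) * t" if t: "0<t" "t\<le>1" for t
  proof -
    have split: "(\<Sum>k\<le>N. d k * t^k) = d n * t^n + (\<Sum>k\<in>{..N}-{n}. d k * t^k)"
      using nN by (subst sum.remove[of _ n]) auto
    have "\<bar>\<Sum>k\<in>{..N}-{n}. d k * t^k\<bar> \<le> (\<Sum>k\<in>{..N}-{n}. \<bar>d k * t^k\<bar>)"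
      by (rule sum_abs)
    also have "\<dots> \<le> (\<Sum>k\<in>{..N}-{n}. \<bar>d k\<bar> * t^(Suc n))"
    proof (rule sum_mono)
      fix k assume k: "k \<in> {..N}-{n}"
      show "\<bar>d k * t ^ k\<bar> \<le> \<bar>d k\<bar> * t ^ Suc n"
      proof (cases "k < n")
        case True then show ?thesis using z by simp
      next
        case False
        with k have "Suc n \<le> k" by auto
        then have "t^k \<le> t^Suc n" using t power_decreasing[of "Suc n" k t] by simp
        then show ?thesis using t by (simp add: abs_mult mult_left_mono)
      qed
    qed
    also have "\<dots> = M * t^Suc n" unfolding M_def by (simp add: sum_distrib_right)
    finally have r: "\<bar>\<Sum>k\<in>{..N}-{n}. d k * t^k\<bar> \<le> M * t^Suc n" .
    have tm: "t^m \<le> t^Suc n" using t nm power_decreasing[of "Suc n" m t] by simp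
    have "\<bar>d n\<bar> * t^n = \<bar>d n * t^n\<bar>" using t by (simp add: abs_mult)
    also have "\<dots> \<le> \<bar>\<Sum>k\<le>N. d k * t^k\<bar> + \<bar>\<Sum>k\<in>{..N}-{n}. d k * t^k\<bar>"
      unfolding split by linarith
    also have "\<dots> \<le> K * t^m + M * t^Suc n" using b t r by force
    also have "\<dots> \<le> K * t^Suc n + M * t^Suc n" using tm K0 by (simp add: mult_left_mono)
    finally have "\<bar>d n\<bar> * t^n \<le> ((K+M) * t) * t^n" by (simp add: algebra_simps)
    then show ?thesis using t by simp
  qed
  define t where "t = min 1 (\<bar>d n\<bar> / (K+M+1))"
  have t0: "0 < t" "t \<le> 1" using dn K0 M0 by (auto simp: t_def)
  have "(K+M) * t < \<bar>d n\<bar>"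
  proof (cases "\<bar>d n\<bar> / (K+M+1) \<le> 1")
    case True
    then have "t = \<bar>d n\<bar> / (K+M+1)" by (simp add: t_def)
    then have "(K+M) * t = \<bar>d n\<bar> * ((K+M)/(K+M+1))" by simp
    also have "\<dots> < \<bar>d n\<bar>" using dn K0 M0 by (simp add: mult_less_cancel_left1 divide_less_eq)
    finally show ?thesis .
  next
    case False
    then have "t = 1" "\<bar>d n\<bar> > K+M+1" using K0 M0 by (auto simp: t_def divide_less_eq)
    then show ?thesis by simp
  qed
  with key[OF t0] show False by linarith
qed

lemma ulow:
  fixes d :: "nat \<Rightarrow> real"
  assumes b: "\<forall>t. 0<t \<and> t\<le>1 \<longrightarrow> \<bar>\<Sum>k\<le>N. d k * t^k\<bar> \<le> K * t^m"
    and "m \<le> Suc N"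
  shows "\<forall>n<m. d n = 0"
proof -
  have "n < m \<longrightarrow> d n = 0" for n
  proof (induction n rule: less_induct)
    case (less n)
    show ?case using ulow_step[OF b, of n] less assms(2) by auto
  qed
  then show ?thesis by blast
qed



fun dot :: "nat\<times>nat\<times>nat\<times>nat \<Rightarrow> (nat \<Rightarrow> nat) \<Rightarrow> nat" where
  "dot (i,j,k,l) p = i*p 0 + j*p 1 + k*p 2 + l*p 3"

lemma mm_scale: "mm b (\<lambda>n. L n * t^(p n)) = mm b L * t^(dot b p)"
  by (cases b) (simp add: power_mult_distrib power_add power_mult[symmetric] mult_ac)

lemma NP:
  assumes rep: "\<forall>v. G v = (\<Sum>b\<in>Box. C b * mm b v)"
    and bnd: "\<forall>L. \<exists>K. \<forall>t. 0<t \<and> t\<le>1 \<longrightarrow> \<bar>G (\<lambda>n. L n * t^(p n))\<bar> \<le> K * t^m"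
    and mN: "m \<le> Suc (8*(p 0+p 1+p 2+p 3))"
    and b: "b \<in> Box" and lt: "dot b p < m"
  shows "C b = 0"
proof -
  define N where "N = 8*(p 0+p 1+p 2+p 3)"
  have img: "(\<lambda>c. dot c p) ` Box \<subseteq> {..N}"
  proof
    fix x assume "x \<in> (\<lambda>c. dot c p) ` Box"
    then obtain i j k l where "i\<le>8" "j\<le>8" "k\<le>8" "l\<le>8" "x = dot (i,j,k,l) p"
      by (auto simp: Box_def)
    then show "x \<in> {..N}" unfolding N_def
      by (simp add: mult_le_mono1 add_mono algebra_simps)
  qed
  define d where "d L k = (\<Sum>c\<in>{c\<in>Box. dot c p = k}. C c * mm c L)" for L k
  have grp: "G (\<lambda>n. L n * t^(p n)) = (\<Sum>k\<le>N. d L k * t^k)" for L t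
  proof -
    have "G (\<lambda>n. L n * t^(p n)) = (\<Sum>c\<in>Box. C c * mm c L * t^(dot c p))"
      using rep by (simp add: mm_scale mult.assoc)
    also have "\<dots> = (\<Sum>k\<le>N. \<Sum>c\<in>{c\<in>Box. dot c p = k}. C c * mm c L * t^(dot c p))"
      using sum.group[OF finite_Box _ img, of "\<lambda>c. C c * mm c L * t^(dot c p)"] by simp
    also have "\<dots> = (\<Sum>k\<le>N. d L k * t^k)"
      unfolding d_def sum_distrib_right by (intro sum.cong refl) auto
    finally show ?thesis .
  qed
  have "d L (dot b p) = 0" for L
  proof -
    obtain K where K: "\<forall>t. 0<t \<and> t\<le>1 \<longrightarrow> \<bar>G (\<lambda>n. L n * t^(p n))\<bar> \<le> K * t^m"
      using bnd by blast
    have "\<forall>n<m. d L n = 0"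
      by (rule ulow[where N=N and K=K]) (use K grp mN in \<open>auto simp: N_def\<close>)
    then show ?thesis using lt by blast
  qed
  moreover have "(\<Sum>c\<in>Box. (if dot c p = dot b p then C c else 0) * mm c L) = d L (dot b p)" for L
    unfolding d_def by (subst sum.inter_filter) (auto intro!: sum.cong)
  ultimately have "\<forall>L. (\<Sum>c\<in>Box. (if dot c p = dot b p then C c else 0) * mm c L) = 0"
    by simp
  from ind[OF this b] show ?thesis by simp
qed



definition P15 :: "(nat\<times>nat\<times>nat\<times>nat) set" where
  "P15 = {(0,2,2,4),(1,2,2,3),(1,2,3,2),(1,3,1,3),(2,1,2,3),(2,2,2,2),(2,2,3,1),(2,2,4,0),
          (2,3,1,2),(2,3,2,1),(2,4,0,2),(3,1,2,2),(3,1,3,1),(3,2,1,2),(4,0,2,2)}"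

lemma comb:
  fixes i j k l :: nat
  assumes "i+j+k+l = 8" "3*i+k+2*l \<ge> 10" "2*i+3*j+l \<ge> 10" "i+2*j+3*k \<ge> 10" "j+2*k+3*l \<ge> 10"
  shows "(i,j,k,l) \<in> P15"
proof -
  have "i \<le> 4" "j \<le> 4" "k \<le> 4" using assms by linarith+
  then have "i \<in> {0,1,2,3,4}" "j \<in> {0,1,2,3,4}" "k \<in> {0,1,2,3,4}" by auto
  moreover have "l = 8 - i - j - k" using assms(1) by linarith
  ultimately show ?thesis using assms unfolding P15_def by (elim insertE emptyE) simp_all
qed



lemma tri5:
  fixes a b c d e :: real
  shows "\<bar>a+b+c+d-e\<bar> \<le> \<bar>a\<bar>+\<bar>b\<bar>+\<bar>c\<bar>+\<bar>d\<bar>+\<bar>e\<bar>"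
proof -
  have 1: "\<bar>a+b+c+d-e\<bar> \<le> \<bar>a+b+c+d\<bar> + \<bar>e\<bar>" by (rule abs_triangle_ineq4)
  have 2: "\<bar>a+b+c+d\<bar> \<le> \<bar>a+b+c\<bar> + \<bar>d\<bar>" by (rule abs_triangle_ineq)
  have 3: "\<bar>a+b+c\<bar> \<le> \<bar>a+b\<bar> + \<bar>c\<bar>" by (rule abs_triangle_ineq)
  have 4: "\<bar>a+b\<bar> \<le> \<bar>a\<bar>+\<bar>b\<bar>" by (rule abs_triangle_ineq)
  show ?thesis
    by (rule order_trans[OF 1 add_right_mono[OF order_trans[OF 2 add_right_mono[OF order_trans[OF 3 add_right_mono[OF 4]]]]]])
qed

lemma absb:
  fixes A B C D E t :: real
  assumes t: "0<t" "t\<le>1" and X: "X = t^10 * (A*t^a + B*t^b + C*t^c + D*t^d - 4*E*t^e)"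
  shows "\<bar>X\<bar> \<le> (\<bar>A\<bar> + \<bar>B\<bar> + \<bar>C\<bar> + \<bar>D\<bar> + 4*\<bar>E\<bar>) * t^10"
proof -
  have q: "\<bar>Y*t^n\<bar> \<le> \<bar>Y\<bar>" for Y n
  proof -
    have "t^n \<le> 1" "0 \<le> t^n" using t by (simp_all add: power_le_one)
    then show ?thesis by (simp add: abs_mult mult_left_le)
  qed
  have q4: "\<bar>4*E*t^e\<bar> \<le> 4*\<bar>E\<bar>" using q[of "4*E" e] by (simp add: abs_mult)
  have "\<bar>A*t^a + B*t^b + C*t^c + D*t^d - 4*E*t^e\<bar>
      \<le> \<bar>A*t^a\<bar> + \<bar>B*t^b\<bar> + \<bar>C*t^c\<bar> + \<bar>D*t^d\<bar> + \<bar>4*E*t^e\<bar>" by (rule tri5)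
  also have "\<dots> \<le> \<bar>A\<bar> + \<bar>B\<bar> + \<bar>C\<bar> + \<bar>D\<bar> + 4*\<bar>E\<bar>"
    by (intro add_mono q q4)
  finally have i: "\<bar>A*t^a + B*t^b + C*t^c + D*t^d - 4*E*t^e\<bar> \<le> \<bar>A\<bar> + \<bar>B\<bar> + \<bar>C\<bar> + \<bar>D\<bar> + 4*\<bar>E\<bar>" .
  have "\<bar>X\<bar> = t^10 * \<bar>A*t^a + B*t^b + C*t^c + D*t^d - 4*E*t^e\<bar>"
    unfolding X using t by (simp add: abs_mult)
  also have "\<dots> \<le> t^10 * (\<bar>A\<bar> + \<bar>B\<bar> + \<bar>C\<bar> + \<bar>D\<bar> + 4*\<bar>E\<bar>)"
    using t i by (intro mult_left_mono) auto
  finally show ?thesis by (simp add: mult.commute)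
qed

definition p1 :: "nat \<Rightarrow> nat" where "p1 n = (if n=0 then 3 else if n=1 then 0 else if n=2 then 1 else 2)"
definition p2 :: "nat \<Rightarrow> nat" where "p2 n = (if n=0 then 2 else if n=1 then 3 else if n=2 then 0 else 1)"
definition p3 :: "nat \<Rightarrow> nat" where "p3 n = (if n=0 then 1 else if n=1 then 2 else if n=2 then 3 else 0)"
definition p4 :: "nat \<Rightarrow> nat" where "p4 n = (if n=0 then 0 else if n=1 then 1 else if n=2 then 2 else 3)"

abbreviation "KK L \<equiv> (\<bar>L 0^4*L 2^2*L 3^2\<bar> + \<bar>L 1^4*L 0^2*L 3^2\<bar> + \<bar>L 2^4*L 0^2*L 1^2\<bar> + \<bar>L 3^4*L 1^2*L 2^2\<bar>
        + 4*\<bar>L 0^2*L 1^2*L 2^2*L 3^2\<bar>)"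

lemma Fb1: assumes t: "0<t" "t\<le>1" shows "\<bar>O41 (\<lambda>n. L n * t^(p1 n))\<bar> \<le> KK L * t^10"
proof -
  define A where "A = L 0^4*L 2^2*L 3^2"
  define B where "B = L 1^4*L 0^2*L 3^2"
  define C where "C = L 2^4*L 0^2*L 1^2"
  define D where "D = L 3^4*L 1^2*L 2^2"
  define E where "E = L 0^2*L 1^2*L 2^2*L 3^2"
  have eq: "O41 (\<lambda>n. L n * t^(p1 n)) = t^10 * (A*t^8 + B*t^0 + C*t^0 + D*t^0 - 4*E*t^2)"
    unfolding A_def B_def C_def D_def E_def O41_def Let_def p1_def
    by (simp add: power_mult_distrib algebra_simps flip: power_mult power_add, (simp add: eval_nat_numeral mult_ac)?)
  show ?thesis using absb[OF t eq] unfolding A_def B_def C_def D_def E_def .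
qed

lemma Fb2: assumes t: "0<t" "t\<le>1" shows "\<bar>O41 (\<lambda>n. L n * t^(p2 n))\<bar> \<le> KK L * t^10"
proof -
  define A where "A = L 0^4*L 2^2*L 3^2"
  define B where "B = L 1^4*L 0^2*L 3^2"
  define C where "C = L 2^4*L 0^2*L 1^2"
  define D where "D = L 3^4*L 1^2*L 2^2"
  define E where "E = L 0^2*L 1^2*L 2^2*L 3^2"
  have eq: "O41 (\<lambda>n. L n * t^(p2 n)) = t^10 * (A*t^0 + B*t^8 + C*t^0 + D*t^0 - 4*E*t^2)"
    unfolding A_def B_def C_def D_def E_def O41_def Let_def p2_def
    by (simp add: power_mult_distrib algebra_simps flip: power_mult power_add, (simp add: eval_nat_numeral mult_ac)?)
  show ?thesis using absb[OF t eq] unfolding A_def B_def C_def D_def E_def .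
qed

lemma Fb3: assumes t: "0<t" "t\<le>1" shows "\<bar>O41 (\<lambda>n. L n * t^(p3 n))\<bar> \<le> KK L * t^10"
proof -
  define A where "A = L 0^4*L 2^2*L 3^2"
  define B where "B = L 1^4*L 0^2*L 3^2"
  define C where "C = L 2^4*L 0^2*L 1^2"
  define D where "D = L 3^4*L 1^2*L 2^2"
  define E where "E = L 0^2*L 1^2*L 2^2*L 3^2"
  have eq: "O41 (\<lambda>n. L n * t^(p3 n)) = t^10 * (A*t^0 + B*t^0 + C*t^8 + D*t^0 - 4*E*t^2)"
    unfolding A_def B_def C_def D_def E_def O41_def Let_def p3_def
    by (simp add: power_mult_distrib algebra_simps flip: power_mult power_add, (simp add: eval_nat_numeral mult_ac)?)
  show ?thesis using absb[OF t eq] unfolding A_def B_def C_def D_def E_def .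
qed

lemma Fb4: assumes t: "0<t" "t\<le>1" shows "\<bar>O41 (\<lambda>n. L n * t^(p4 n))\<bar> \<le> KK L * t^10"
proof -
  define A where "A = L 0^4*L 2^2*L 3^2"
  define B where "B = L 1^4*L 0^2*L 3^2"
  define C where "C = L 2^4*L 0^2*L 1^2"
  define D where "D = L 3^4*L 1^2*L 2^2"
  define E where "E = L 0^2*L 1^2*L 2^2*L 3^2"
  have eq: "O41 (\<lambda>n. L n * t^(p4 n)) = t^10 * (A*t^0 + B*t^0 + C*t^0 + D*t^8 - 4*E*t^2)"
    unfolding A_def B_def C_def D_def E_def O41_def Let_def p4_def
    by (simp add: power_mult_distrib algebra_simps flip: power_mult power_add, (simp add: eval_nat_numeral mult_ac)?)
  show ?thesis using absb[OF t eq] unfolding A_def B_def C_def D_def E_def .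
qed


definition vec4 :: "real \<Rightarrow> real \<Rightarrow> real \<Rightarrow> real \<Rightarrow> nat \<Rightarrow> real" where
  "vec4 x y z w = (\<lambda>n. if n=0 then x else if n=1 then y else if n=2 then z else w)"

fun dmx :: "nat\<times>nat\<times>nat\<times>nat \<Rightarrow> real \<Rightarrow> real \<Rightarrow> real \<Rightarrow> real \<Rightarrow> real" where
  "dmx (i,j,k,l) x y z w = of_nat i * x^(i-1) * y^j * z^k * w^l"
fun dmy :: "nat\<times>nat\<times>nat\<times>nat \<Rightarrow> real \<Rightarrow> real \<Rightarrow> real \<Rightarrow> real \<Rightarrow> real" where
  "dmy (i,j,k,l) x y z w = x^i * (of_nat j * y^(j-1)) * z^k * w^l"
fun dmz :: "nat\<times>nat\<times>nat\<times>nat \<Rightarrow> real \<Rightarrow> real \<Rightarrow> real \<Rightarrow> real \<Rightarrow> real" where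
  "dmz (i,j,k,l) x y z w = x^i * y^j * (of_nat k * z^(k-1)) * w^l"

lemma dx: "((\<lambda>t. \<Sum>b\<in>A. C b * mm b (vec4 t y z w)) has_real_derivative (\<Sum>b\<in>A. C b * dmx b t y z w)) (at t)"
proof (rule DERIV_sum)
  fix b :: "nat\<times>nat\<times>nat\<times>nat"
  obtain i j k l where b: "b = (i,j,k,l)" by (cases b) auto
  show "((\<lambda>t. C b * mm b (vec4 t y z w)) has_real_derivative C b * dmx b t y z w) (at t)"
    unfolding b by (auto simp: vec4_def intro!: derivative_eq_intros)
qed
lemma dy: "((\<lambda>t. \<Sum>b\<in>A. C b * mm b (vec4 x t z w)) has_real_derivative (\<Sum>b\<in>A. C b * dmy b x t z w)) (at t)"
proof (rule DERIV_sum)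
  fix b :: "nat\<times>nat\<times>nat\<times>nat"
  obtain i j k l where b: "b = (i,j,k,l)" by (cases b) auto
  show "((\<lambda>t. C b * mm b (vec4 x t z w)) has_real_derivative C b * dmy b x t z w) (at t)"
    unfolding b by (auto simp: vec4_def intro!: derivative_eq_intros)
qed
lemma dz: "((\<lambda>t. \<Sum>b\<in>A. C b * mm b (vec4 x y t w)) has_real_derivative (\<Sum>b\<in>A. C b * dmz b x y t w)) (at t)"
proof (rule DERIV_sum)
  fix b :: "nat\<times>nat\<times>nat\<times>nat"
  obtain i j k l where b: "b = (i,j,k,l)" by (cases b) auto
  show "((\<lambda>t. C b * mm b (vec4 x y t w)) has_real_derivative C b * dmz b x y t w) (at t)"
    unfolding b by (auto simp: vec4_def intro!: derivative_eq_intros)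
qed

lemma crit:
  fixes f :: "real \<Rightarrow> real"
  assumes "\<forall>t. f t \<ge> 0" "f x0 = 0" "(f has_real_derivative D) (at x0)"
  shows "D = 0"
  using DERIV_local_min[OF assms(3), of 1] assms(1,2) by auto



lemma amgm:
  fixes a b c d :: real
  assumes "a\<ge>0" "b\<ge>0" "c\<ge>0" "d\<ge>0"
  shows "a^4*c^2*d^2 + b^4*a^2*d^2 + c^4*a^2*b^2 + d^4*b^2*c^2 - 4*a^2*b^2*c^2*d^2 \<ge> 0"
proof -
  have "a^4*c^2*d^2 + b^4*a^2*d^2 + c^4*a^2*b^2 + d^4*b^2*c^2 - 4*a^2*b^2*c^2*d^2
      = (a^2*c*d - a*b^2*d)^2 + (a*b*c^2 - b*c*d^2)^2 + 2*(a*b^2*c*d^2)*(a-c)^2"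
    by (simp add: power2_eq_square eval_nat_numeral algebra_simps)
  moreover have "a*b^2*c*d^2 \<ge> 0" using assms by simp
  ultimately show ?thesis by (metis add_nonneg_nonneg mult_nonneg_nonneg zero_le_power2 zero_le_numeral)
qed

lemma O41_nonneg: "O41 v \<ge> 0"
proof -
  have "O41 v = \<bar>v 0\<bar>^4*\<bar>v 2\<bar>^2*\<bar>v 3\<bar>^2 + \<bar>v 1\<bar>^4*\<bar>v 0\<bar>^2*\<bar>v 3\<bar>^2 + \<bar>v 2\<bar>^4*\<bar>v 0\<bar>^2*\<bar>v 1\<bar>^2
      + \<bar>v 3\<bar>^4*\<bar>v 1\<bar>^2*\<bar>v 2\<bar>^2 - 4*\<bar>v 0\<bar>^2*\<bar>v 1\<bar>^2*\<bar>v 2\<bar>^2*\<bar>v 3\<bar>^2"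
    by (simp add: O41_def Let_def)
  then show ?thesis using amgm[of "\<bar>v 0\<bar>" "\<bar>v 1\<bar>" "\<bar>v 2\<bar>" "\<bar>v 3\<bar>"] by simp
qed

definition ex4 :: "nat \<Rightarrow> nat \<Rightarrow> nat \<Rightarrow> nat \<Rightarrow> nat \<Rightarrow> nat" where
  "ex4 i j k l = (\<lambda>n. if n=0 then i else if n=1 then j else if n=2 then k else if n=3 then l else 0)"

lemma ex4_inj: "ex4 a b c d = ex4 a' b' c' d' \<longleftrightarrow> (a=a' \<and> b=b' \<and> c=c' \<and> d=d')"
proof
  assume e: "ex4 a b c d = ex4 a' b' c' d'"
  have "ex4 a b c d n = ex4 a' b' c' d' n" for n using e by simp
  from this[of 0] this[of 1] this[of 2] this[of 3] show "a=a' \<and> b=b' \<and> c=c' \<and> d=d'"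
    by (simp add: ex4_def)
qed simp

lemma O41_form: "is_form 4 8 O41"
  unfolding is_form_def
proof (intro exI conjI)
  let ?S = "{ex4 4 0 2 2, ex4 2 4 0 2, ex4 2 2 4 0, ex4 0 2 2 4, ex4 2 2 2 2}"
  let ?c = "\<lambda>a. if a = ex4 2 2 2 2 then -4 else (1::real)"
  show "finite ?S" by simp
  show "\<forall>a\<in>?S. (\<forall>i\<ge>4. a i = 0) \<and> (\<Sum>i<4. a i) = 8"
    by (auto simp: ex4_def eval_nat_numeral)
  show "\<forall>x. O41 x = (\<Sum>a\<in>?S. ?c a * (\<Prod>i<4. x i ^ a i))"
  proof
    fix x :: "nat \<Rightarrow> real"
    have "(\<Sum>a\<in>?S. ?c a * (\<Prod>i<4. x i ^ a i)) = (\<Prod>i<4. x i ^ ex4 4 0 2 2 i) + (\<Prod>i<4. x i ^ ex4 2 4 0 2 i)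
      + (\<Prod>i<4. x i ^ ex4 2 2 4 0 i) + (\<Prod>i<4. x i ^ ex4 0 2 2 4 i) - 4 * (\<Prod>i<4. x i ^ ex4 2 2 2 2 i)"
      by (simp add: ex4_inj)
    also have "\<dots> = O41 x"
      by (simp add: O41_def Let_def ex4_def eval_nat_numeral algebra_simps)
    finally show "O41 x = (\<Sum>a\<in>?S. ?c a * (\<Prod>i<4. x i ^ a i))" by simp
  qed
qed



lemma main:
  assumes F1: "F1 \<in> psd_forms 4 8" and le: "\<forall>v. F1 v \<le> O41 v"
  shows "\<exists>lam. \<forall>v. F1 v = lam * O41 v"
proof -
  have isf: "is_form 4 8 F1" and pos: "\<forall>v. F1 v \<ge> 0" using F1 by (auto simp: psd_forms_def)
  obtain C where rp: "\<And>v. F1 v = (\<Sum>b\<in>Box. C b * mm b v)"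
    and supp0: "\<And>b. C b \<noteq> 0 \<Longrightarrow> b\<in>Box \<and> bsum b = 8"
    using rep[OF isf] by blast
  have absF: "\<bar>F1 v\<bar> \<le> \<bar>O41 v\<bar>" for v using pos le by (metis abs_of_nonneg order_trans abs_ge_self)
  have z1: "C b = 0" if "b\<in>Box" "dot b p1 < 10" for b
  proof (rule NP[where G=F1 and p=p1 and m=10])
    show "\<forall>L. \<exists>K. \<forall>t. 0<t \<and> t\<le>1 \<longrightarrow> \<bar>F1 (\<lambda>n. L n * t^(p1 n))\<bar> \<le> K * t^10"
      using absF Fb1 order_trans by blast
  qed (use rp that in \<open>auto simp: p1_def\<close>)
  have z2: "C b = 0" if "b\<in>Box" "dot b p2 < 10" for b
  proof (rule NP[where G=F1 and p=p2 and m=10])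
    show "\<forall>L. \<exists>K. \<forall>t. 0<t \<and> t\<le>1 \<longrightarrow> \<bar>F1 (\<lambda>n. L n * t^(p2 n))\<bar> \<le> K * t^10"
      using absF Fb2 order_trans by blast
  qed (use rp that in \<open>auto simp: p2_def\<close>)
  have z3: "C b = 0" if "b\<in>Box" "dot b p3 < 10" for b
  proof (rule NP[where G=F1 and p=p3 and m=10])
    show "\<forall>L. \<exists>K. \<forall>t. 0<t \<and> t\<le>1 \<longrightarrow> \<bar>F1 (\<lambda>n. L n * t^(p3 n))\<bar> \<le> K * t^10"
      using absF Fb3 order_trans by blast
  qed (use rp that in \<open>auto simp: p3_def\<close>)
  have z4: "C b = 0" if "b\<in>Box" "dot b p4 < 10" for b
  proof (rule NP[where G=F1 and p=p4 and m=10])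
    show "\<forall>L. \<exists>K. \<forall>t. 0<t \<and> t\<le>1 \<longrightarrow> \<bar>F1 (\<lambda>n. L n * t^(p4 n))\<bar> \<le> K * t^10"
      using absF Fb4 order_trans by blast
  qed (use rp that in \<open>auto simp: p4_def\<close>)
  have supp: "b \<in> P15" if "C b \<noteq> 0" for b
  proof -
    obtain i j k l where b: "b = (i,j,k,l)" by (cases b) auto
    from supp0[OF that] have B: "b \<in> Box" "i+j+k+l = 8" by (auto simp: b)
    have "\<not> dot b p1 < 10" "\<not> dot b p2 < 10" "\<not> dot b p3 < 10" "\<not> dot b p4 < 10"
      using z1[OF B(1)] z2[OF B(1)] z3[OF B(1)] z4[OF B(1)] that by auto
    then show ?thesis unfolding b using B(2)
      by (intro comb) (auto simp: p1_def p2_def p3_def p4_def)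
  qed
  have sub: "P15 \<subseteq> Box" by (auto simp: P15_def Box_def)
  have rp15: "F1 v = (\<Sum>b\<in>P15. C b * mm b v)" for v
    unfolding rp by (rule sum.mono_neutral_right[OF finite_Box sub]) (use supp in force)
  have fz: "F1 (vec4 x y z w) = 0" if "O41 (vec4 x y z w) = 0" for x y z w
    using pos le that by (metis order_antisym)
  have ev: "(\<Sum>b\<in>P15. C b * mm b (vec4 x y z w)) = 0" if "O41 (vec4 x y z w) = 0" for x y z w
    using fz[OF that] rp15 by simp
  have ex: "(\<Sum>b\<in>P15. C b * dmx b x y z w) = 0" if "O41 (vec4 x y z w) = 0" for x y z w
    by (rule crit[OF _ _ dx]) (use pos rp15 ev[OF that] in auto)
  have ey: "(\<Sum>b\<in>P15. C b * dmy b x y z w) = 0" if "O41 (vec4 x y z w) = 0" for x y z w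
    by (rule crit[OF _ _ dy]) (use pos rp15 ev[OF that] in auto)
  have ez: "(\<Sum>b\<in>P15. C b * dmz b x y z w) = 0" if "O41 (vec4 x y z w) = 0" for x y z w
    by (rule crit[OF _ _ dz]) (use pos rp15 ev[OF that] in auto)
  have Oz: "O41 (vec4 1 1 1 1) = 0" "O41 (vec4 1 1 1 (-1)) = 0" "O41 (vec4 1 1 (-1) 1) = 0"
     "O41 (vec4 1 1 (-1) (-1)) = 0" "O41 (vec4 1 (-1) 1 1) = 0"
    by (simp_all add: O41_def vec4_def)
  note eqs = ev[OF Oz(1)] ex[OF Oz(1)] ey[OF Oz(1)] ez[OF Oz(1)]
     ev[OF Oz(2)] ex[OF Oz(2)] ey[OF Oz(2)] ez[OF Oz(2)]
     ev[OF Oz(3)] ex[OF Oz(3)] ey[OF Oz(3)]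
     ev[OF Oz(4)] ex[OF Oz(4)] ev[OF Oz(5)]
  define lam where "lam = C (4,0,2,2)"
  have "4 * (C (0,2,2,4) - (1) * C (4,0,2,2)) = (4) * (\<Sum>b\<in>P15. C b * mm b (vec4 (1) (1) (1) (1))) + (- 2) * (\<Sum>b\<in>P15. C b * dmx b (1) (1) (1) (1)) + (- 1) * (\<Sum>b\<in>P15. C b * dmy b (1) (1) (1) (1)) + (1) * (\<Sum>b\<in>P15. C b * dmz b (1) (1) (1) (1)) + (1) * (\<Sum>b\<in>P15. C b * mm b (vec4 (1) (1) (1) (- 1))) + (1) * (\<Sum>b\<in>P15. C b * dmx b (1) (1) (1) (- 1)) + (- 1) * (\<Sum>b\<in>P15. C b * dmz b (1) (1) (1) (- 1)) + (- 2) * (\<Sum>b\<in>P15. C b * mm b (vec4 (1) (1) (- 1) (1))) + (1) * (\<Sum>b\<in>P15. C b * dmy b (1) (1) (- 1) (1)) + (2) * (\<Sum>b\<in>P15. C b * mm b (vec4 (1) (1) (- 1) (- 1))) + (- 1) * (\<Sum>b\<in>P15. C b * dmx b (1) (1) (- 1) (- 1)) + (- 1) * (\<Sum>b\<in>P15. C b * mm b (vec4 (1) (- 1) (1) (1)))"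
    by (simp add: P15_def vec4_def algebra_simps)
  then have "C (0,2,2,4) = (1) * lam" unfolding lam_def using eqs by simp
  moreover have "4 * (C (1,2,2,3) - (0) * C (4,0,2,2)) = (2) * (\<Sum>b\<in>P15. C b * mm b (vec4 (1) (1) (1) (1))) + (- 1) * (\<Sum>b\<in>P15. C b * dmx b (1) (1) (1) (1)) + (- 2) * (\<Sum>b\<in>P15. C b * mm b (vec4 (1) (1) (1) (- 1))) + (1) * (\<Sum>b\<in>P15. C b * dmx b (1) (1) (1) (- 1)) + (2) * (\<Sum>b\<in>P15. C b * mm b (vec4 (1) (1) (- 1) (1))) + (- 1) * (\<Sum>b\<in>P15. C b * dmx b (1) (1) (- 1) (1)) + (- 2) * (\<Sum>b\<in>P15. C b * mm b (vec4 (1) (1) (- 1) (- 1))) + (1) * (\<Sum>b\<in>P15. C b * dmx b (1) (1) (- 1) (- 1))"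
    by (simp add: P15_def vec4_def algebra_simps)
  then have "C (1,2,2,3) = (0) * lam" unfolding lam_def using eqs by simp
  moreover have "8 * (C (1,2,3,2) - (0) * C (4,0,2,2)) = (9) * (\<Sum>b\<in>P15. C b * mm b (vec4 (1) (1) (1) (1))) + (- 2) * (\<Sum>b\<in>P15. C b * dmx b (1) (1) (1) (1)) + (- 2) * (\<Sum>b\<in>P15. C b * dmy b (1) (1) (1) (1)) + (1) * (\<Sum>b\<in>P15. C b * mm b (vec4 (1) (1) (1) (- 1))) + (- 9) * (\<Sum>b\<in>P15. C b * mm b (vec4 (1) (1) (- 1) (1))) + (2) * (\<Sum>b\<in>P15. C b * dmx b (1) (1) (- 1) (1)) + (2) * (\<Sum>b\<in>P15. C b * dmy b (1) (1) (- 1) (1)) + (- 1) * (\<Sum>b\<in>P15. C b * mm b (vec4 (1) (1) (- 1) (- 1)))"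
    by (simp add: P15_def vec4_def algebra_simps)
  then have "C (1,2,3,2) = (0) * lam" unfolding lam_def using eqs by simp
  moreover have "8 * (C (1,3,1,3) - (0) * C (4,0,2,2)) = (5) * (\<Sum>b\<in>P15. C b * mm b (vec4 (1) (1) (1) (1))) + (- 2) * (\<Sum>b\<in>P15. C b * dmz b (1) (1) (1) (1)) + (- 5) * (\<Sum>b\<in>P15. C b * mm b (vec4 (1) (1) (1) (- 1))) + (2) * (\<Sum>b\<in>P15. C b * dmz b (1) (1) (1) (- 1)) + (- 1) * (\<Sum>b\<in>P15. C b * mm b (vec4 (1) (1) (- 1) (1))) + (1) * (\<Sum>b\<in>P15. C b * mm b (vec4 (1) (1) (- 1) (- 1)))"
    by (simp add: P15_def vec4_def algebra_simps)
  then have "C (1,3,1,3) = (0) * lam" unfolding lam_def using eqs by simp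
  moreover have "8 * (C (2,1,2,3) - (0) * C (4,0,2,2)) = (5) * (\<Sum>b\<in>P15. C b * mm b (vec4 (1) (1) (1) (1))) + (- 2) * (\<Sum>b\<in>P15. C b * dmy b (1) (1) (1) (1)) + (- 5) * (\<Sum>b\<in>P15. C b * mm b (vec4 (1) (1) (1) (- 1))) + (2) * (\<Sum>b\<in>P15. C b * dmy b (1) (1) (1) (- 1)) + (- 3) * (\<Sum>b\<in>P15. C b * mm b (vec4 (1) (1) (- 1) (1))) + (2) * (\<Sum>b\<in>P15. C b * dmx b (1) (1) (- 1) (1)) + (3) * (\<Sum>b\<in>P15. C b * mm b (vec4 (1) (1) (- 1) (- 1))) + (- 2) * (\<Sum>b\<in>P15. C b * dmx b (1) (1) (- 1) (- 1))"
    by (simp add: P15_def vec4_def algebra_simps)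
  then have "C (2,1,2,3) = (0) * lam" unfolding lam_def using eqs by simp
  moreover have "4 * (C (2,2,2,2) - (- 4) * C (4,0,2,2)) = (- 11) * (\<Sum>b\<in>P15. C b * mm b (vec4 (1) (1) (1) (1))) + (8) * (\<Sum>b\<in>P15. C b * dmx b (1) (1) (1) (1)) + (4) * (\<Sum>b\<in>P15. C b * dmy b (1) (1) (1) (1)) + (- 6) * (\<Sum>b\<in>P15. C b * dmz b (1) (1) (1) (1)) + (8) * (\<Sum>b\<in>P15. C b * mm b (vec4 (1) (1) (1) (- 1))) + (- 8) * (\<Sum>b\<in>P15. C b * dmx b (1) (1) (1) (- 1)) + (- 2) * (\<Sum>b\<in>P15. C b * dmy b (1) (1) (1) (- 1)) + (4) * (\<Sum>b\<in>P15. C b * dmz b (1) (1) (1) (- 1)) + (17) * (\<Sum>b\<in>P15. C b * mm b (vec4 (1) (1) (- 1) (1))) + (- 2) * (\<Sum>b\<in>P15. C b * dmx b (1) (1) (- 1) (1)) + (- 6) * (\<Sum>b\<in>P15. C b * dmy b (1) (1) (- 1) (1)) + (- 7) * (\<Sum>b\<in>P15. C b * mm b (vec4 (1) (1) (- 1) (- 1))) + (4) * (\<Sum>b\<in>P15. C b * dmx b (1) (1) (- 1) (- 1)) + (5) * (\<Sum>b\<in>P15. C b * mm b (vec4 (1) (- 1) (1) (1)))"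
    by (simp add: P15_def vec4_def algebra_simps)
  then have "C (2,2,2,2) = (- 4) * lam" unfolding lam_def using eqs by simp
  moreover have "4 * (C (2,2,3,1) - (0) * C (4,0,2,2)) = (- 2) * (\<Sum>b\<in>P15. C b * mm b (vec4 (1) (1) (1) (1))) + (- 1) * (\<Sum>b\<in>P15. C b * dmx b (1) (1) (1) (1)) + (2) * (\<Sum>b\<in>P15. C b * dmz b (1) (1) (1) (1)) + (2) * (\<Sum>b\<in>P15. C b * mm b (vec4 (1) (1) (1) (- 1))) + (1) * (\<Sum>b\<in>P15. C b * dmx b (1) (1) (1) (- 1)) + (- 2) * (\<Sum>b\<in>P15. C b * dmz b (1) (1) (1) (- 1)) + (- 2) * (\<Sum>b\<in>P15. C b * mm b (vec4 (1) (1) (- 1) (1))) + (1) * (\<Sum>b\<in>P15. C b * dmx b (1) (1) (- 1) (1)) + (2) * (\<Sum>b\<in>P15. C b * mm b (vec4 (1) (1) (- 1) (- 1))) + (- 1) * (\<Sum>b\<in>P15. C b * dmx b (1) (1) (- 1) (- 1))"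
    by (simp add: P15_def vec4_def algebra_simps)
  then have "C (2,2,3,1) = (0) * lam" unfolding lam_def using eqs by simp
  moreover have "4 * (C (2,2,4,0) - (1) * C (4,0,2,2)) = (- 2) * (\<Sum>b\<in>P15. C b * mm b (vec4 (1) (1) (1) (1))) + (- 1) * (\<Sum>b\<in>P15. C b * dmx b (1) (1) (1) (1)) + (2) * (\<Sum>b\<in>P15. C b * dmz b (1) (1) (1) (1)) + (- 5) * (\<Sum>b\<in>P15. C b * mm b (vec4 (1) (1) (1) (- 1))) + (2) * (\<Sum>b\<in>P15. C b * dmx b (1) (1) (1) (- 1)) + (1) * (\<Sum>b\<in>P15. C b * dmy b (1) (1) (1) (- 1)) + (- 2) * (\<Sum>b\<in>P15. C b * mm b (vec4 (1) (1) (- 1) (1))) + (1) * (\<Sum>b\<in>P15. C b * dmy b (1) (1) (- 1) (1)) + (2) * (\<Sum>b\<in>P15. C b * mm b (vec4 (1) (1) (- 1) (- 1))) + (- 1) * (\<Sum>b\<in>P15. C b * dmx b (1) (1) (- 1) (- 1)) + (- 1) * (\<Sum>b\<in>P15. C b * mm b (vec4 (1) (- 1) (1) (1)))"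
    by (simp add: P15_def vec4_def algebra_simps)
  then have "C (2,2,4,0) = (1) * lam" unfolding lam_def using eqs by simp
  moreover have "4 * (C (2,3,1,2) - (0) * C (4,0,2,2)) = (- 6) * (\<Sum>b\<in>P15. C b * mm b (vec4 (1) (1) (1) (1))) + (1) * (\<Sum>b\<in>P15. C b * dmx b (1) (1) (1) (1)) + (2) * (\<Sum>b\<in>P15. C b * dmy b (1) (1) (1) (1)) + (2) * (\<Sum>b\<in>P15. C b * mm b (vec4 (1) (1) (1) (- 1))) + (- 1) * (\<Sum>b\<in>P15. C b * dmx b (1) (1) (1) (- 1)) + (6) * (\<Sum>b\<in>P15. C b * mm b (vec4 (1) (1) (- 1) (1))) + (- 1) * (\<Sum>b\<in>P15. C b * dmx b (1) (1) (- 1) (1)) + (- 2) * (\<Sum>b\<in>P15. C b * dmy b (1) (1) (- 1) (1)) + (- 2) * (\<Sum>b\<in>P15. C b * mm b (vec4 (1) (1) (- 1) (- 1))) + (1) * (\<Sum>b\<in>P15. C b * dmx b (1) (1) (- 1) (- 1))"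
    by (simp add: P15_def vec4_def algebra_simps)
  then have "C (2,3,1,2) = (0) * lam" unfolding lam_def using eqs by simp
  moreover have "8 * (C (2,3,2,1) - (0) * C (4,0,2,2)) = (- 7) * (\<Sum>b\<in>P15. C b * mm b (vec4 (1) (1) (1) (1))) + (2) * (\<Sum>b\<in>P15. C b * dmx b (1) (1) (1) (1)) + (2) * (\<Sum>b\<in>P15. C b * dmy b (1) (1) (1) (1)) + (7) * (\<Sum>b\<in>P15. C b * mm b (vec4 (1) (1) (1) (- 1))) + (- 2) * (\<Sum>b\<in>P15. C b * dmx b (1) (1) (1) (- 1)) + (- 2) * (\<Sum>b\<in>P15. C b * dmy b (1) (1) (1) (- 1)) + (1) * (\<Sum>b\<in>P15. C b * mm b (vec4 (1) (1) (- 1) (1))) + (- 1) * (\<Sum>b\<in>P15. C b * mm b (vec4 (1) (1) (- 1) (- 1)))"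
    by (simp add: P15_def vec4_def algebra_simps)
  then have "C (2,3,2,1) = (0) * lam" unfolding lam_def using eqs by simp
  moreover have "4 * (C (2,4,0,2) - (1) * C (4,0,2,2)) = (4) * (\<Sum>b\<in>P15. C b * mm b (vec4 (1) (1) (1) (1))) + (- 2) * (\<Sum>b\<in>P15. C b * dmx b (1) (1) (1) (1)) + (- 1) * (\<Sum>b\<in>P15. C b * dmy b (1) (1) (1) (1)) + (1) * (\<Sum>b\<in>P15. C b * dmz b (1) (1) (1) (1)) + (- 3) * (\<Sum>b\<in>P15. C b * mm b (vec4 (1) (1) (1) (- 1))) + (2) * (\<Sum>b\<in>P15. C b * dmx b (1) (1) (1) (- 1)) + (1) * (\<Sum>b\<in>P15. C b * dmy b (1) (1) (1) (- 1)) + (- 1) * (\<Sum>b\<in>P15. C b * dmz b (1) (1) (1) (- 1)) + (- 6) * (\<Sum>b\<in>P15. C b * mm b (vec4 (1) (1) (- 1) (1))) + (1) * (\<Sum>b\<in>P15. C b * dmx b (1) (1) (- 1) (1)) + (2) * (\<Sum>b\<in>P15. C b * dmy b (1) (1) (- 1) (1)) + (2) * (\<Sum>b\<in>P15. C b * mm b (vec4 (1) (1) (- 1) (- 1))) + (- 1) * (\<Sum>b\<in>P15. C b * dmx b (1) (1) (- 1) (- 1)) + (- 1) * (\<Sum>b\<in>P15. C b * mm b (vec4 (1) (- 1) (1) (1)))"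
    by (simp add: P15_def vec4_def algebra_simps)
  then have "C (2,4,0,2) = (1) * lam" unfolding lam_def using eqs by simp
  moreover have "4 * (C (3,1,2,2) - (0) * C (4,0,2,2)) = (6) * (\<Sum>b\<in>P15. C b * mm b (vec4 (1) (1) (1) (1))) + (- 3) * (\<Sum>b\<in>P15. C b * dmx b (1) (1) (1) (1)) + (- 2) * (\<Sum>b\<in>P15. C b * dmy b (1) (1) (1) (1)) + (2) * (\<Sum>b\<in>P15. C b * dmz b (1) (1) (1) (1)) + (3) * (\<Sum>b\<in>P15. C b * dmx b (1) (1) (1) (- 1)) + (- 2) * (\<Sum>b\<in>P15. C b * dmz b (1) (1) (1) (- 1)) + (- 6) * (\<Sum>b\<in>P15. C b * mm b (vec4 (1) (1) (- 1) (1))) + (1) * (\<Sum>b\<in>P15. C b * dmx b (1) (1) (- 1) (1)) + (2) * (\<Sum>b\<in>P15. C b * dmy b (1) (1) (- 1) (1)) + (2) * (\<Sum>b\<in>P15. C b * mm b (vec4 (1) (1) (- 1) (- 1))) + (- 1) * (\<Sum>b\<in>P15. C b * dmx b (1) (1) (- 1) (- 1)) + (- 2) * (\<Sum>b\<in>P15. C b * mm b (vec4 (1) (- 1) (1) (1)))"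
    by (simp add: P15_def vec4_def algebra_simps)
  then have "C (3,1,2,2) = (0) * lam" unfolding lam_def using eqs by simp
  moreover have "8 * (C (3,1,3,1) - (0) * C (4,0,2,2)) = (1) * (\<Sum>b\<in>P15. C b * mm b (vec4 (1) (1) (1) (1))) + (2) * (\<Sum>b\<in>P15. C b * dmx b (1) (1) (1) (1)) + (- 2) * (\<Sum>b\<in>P15. C b * dmz b (1) (1) (1) (1)) + (- 1) * (\<Sum>b\<in>P15. C b * mm b (vec4 (1) (1) (1) (- 1))) + (- 2) * (\<Sum>b\<in>P15. C b * dmx b (1) (1) (1) (- 1)) + (2) * (\<Sum>b\<in>P15. C b * dmz b (1) (1) (1) (- 1)) + (3) * (\<Sum>b\<in>P15. C b * mm b (vec4 (1) (1) (- 1) (1))) + (- 2) * (\<Sum>b\<in>P15. C b * dmx b (1) (1) (- 1) (1)) + (- 3) * (\<Sum>b\<in>P15. C b * mm b (vec4 (1) (1) (- 1) (- 1))) + (2) * (\<Sum>b\<in>P15. C b * dmx b (1) (1) (- 1) (- 1))"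
    by (simp add: P15_def vec4_def algebra_simps)
  then have "C (3,1,3,1) = (0) * lam" unfolding lam_def using eqs by simp
  moreover have "8 * (C (3,2,1,2) - (0) * C (4,0,2,2)) = (5) * (\<Sum>b\<in>P15. C b * mm b (vec4 (1) (1) (1) (1))) + (- 2) * (\<Sum>b\<in>P15. C b * dmy b (1) (1) (1) (1)) + (- 3) * (\<Sum>b\<in>P15. C b * mm b (vec4 (1) (1) (1) (- 1))) + (2) * (\<Sum>b\<in>P15. C b * dmx b (1) (1) (1) (- 1)) + (- 5) * (\<Sum>b\<in>P15. C b * mm b (vec4 (1) (1) (- 1) (1))) + (2) * (\<Sum>b\<in>P15. C b * dmy b (1) (1) (- 1) (1)) + (3) * (\<Sum>b\<in>P15. C b * mm b (vec4 (1) (1) (- 1) (- 1))) + (- 2) * (\<Sum>b\<in>P15. C b * dmx b (1) (1) (- 1) (- 1))"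
    by (simp add: P15_def vec4_def algebra_simps)
  then have "C (3,2,1,2) = (0) * lam" unfolding lam_def using eqs by simp
  ultimately have sol: "C (0,2,2,4) = lam" "C (1,2,2,3) = 0" "C (1,2,3,2) = 0" "C (1,3,1,3) = 0" "C (2,1,2,3) = 0" "C (2,2,2,2) = - 4 * lam" "C (2,2,3,1) = 0" "C (2,2,4,0) = lam" "C (2,3,1,2) = 0" "C (2,3,2,1) = 0" "C (2,4,0,2) = lam" "C (3,1,2,2) = 0" "C (3,1,3,1) = 0" "C (3,2,1,2) = 0" by simp_all
  show ?thesis
  proof (intro exI allI)
    fix v
    show "F1 v = lam * O41 v"
      using sol sol[unfolded One_nat_def] lam_def[symmetric]
      unfolding rp15 by (simp add: P15_def O41_def Let_def algebra_simps)
  qed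
qed


theorem theorem1:
  shows "extremal 4 8 O41"
  unfolding extremal_def
proof (intro conjI allI impI)
  show "O41 \<in> psd_forms 4 8" using O41_form O41_nonneg by (simp add: psd_forms_def)
  fix F1 F2
  assume h1: "F1 \<in> psd_forms 4 8" and h2: "F2 \<in> psd_forms 4 8" and s: "\<forall>x. O41 x = F1 x + F2 x"
  have le: "\<forall>v. F1 v \<le> O41 v" using h2 s by (auto simp: psd_forms_def)
  obtain lam where l: "\<forall>v. F1 v = lam * O41 v" using main[OF h1 le] by blast
  have p: "O41 (vec4 1 0 1 1) = 1" by (simp add: O41_def vec4_def)
  have "F1 (vec4 1 0 1 1) \<ge> 0" "F2 (vec4 1 0 1 1) \<ge> 0" using h1 h2 by (auto simp: psd_forms_def)
  then have "lam \<ge> 0" "1 - lam \<ge> 0" using l s p by (metis mult.right_neutral, metis add_diff_cancel_left' mult.right_neutral)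
  moreover have "\<forall>x. F2 x = (1 - lam) * O41 x" using l s by (simp add: algebra_simps)
  ultimately show "\<exists>l1 l2::real. l1 \<ge> 0 \<and> l2 \<ge> 0 \<and> (\<forall>x. F1 x = l1 * O41 x) \<and> (\<forall>x. F2 x = l2 * O41 x)"
    using l by blast
qed

end
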